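(* For each $\clubsuit\in\{\mathbf K^p,\mathbf T^p,\mathbf B^p,\mathbf V,\mathbf{KB4}^p,\mathbf I,\mathbf O,\mathbf C\}$, $\vdash_\clubsuit$ is strongly complete with respect to $\mathcal C_\clubsuit$: for every $\Gamma\subseteq Form$ and $\varphi\in Form$, if $\Gamma\models_{\mathcal C_\clubsuit}\varphi$ then $\Gamma\vdash_\clubsuit\varphi$.
   Context: Fix a countable set $P0$ of propositional variables; $Form$: $\varphi::=p\mid\bot\mid(\varphi\wedge\varphi)\mid(\varphi\to\varphi)$ ($\wedge$ left-associative, binds tighter than $\to$). A model is $\mathfrak M=(W,R,V)$ with $W\neq\emptyset$, $R\subseteq W\times W$, $V:P0\to\wp(W)$; pointed model $(\mathfrak M,s)$, $s\in W$. Satisfaction: $\bot$ never true; $p$ true at $s$ iff $s\in V(p)$; $\wedge$ pointwise; $\mathfrak M,s\models\varphi\to\psi$ iff for all $t$ with $sRt$, $\mathfrak M,t\models\varphi$ implies $\mathfrak M,t\models\psi$. For $X\subseteq W$: $R[X]=\{t:\exists s\in X,\ sRt\}$, $R^\Box(X)=\{s:\forall t\,(sRt\Rightarrow t\in X)\}$. A proposition of $(W,R)$ is $X\subseteq W$ with $R[X]\cap R^\Box(R[X])\subseteq X$; an interpretation is a model with every $V(p)$ a proposition. Classes of models: $\mathcal D_{\mathbf K^p}$ all interpretations; $\mathcal D_{\mathbf T^p}$ reflexive interpretations; $\mathcal D_{\mathbf B^p}$ symmetric; $\mathcal D_{\mathbf V}$ transitive; $\mathcal D_{\mathbf{KB4}^p}$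 symmetric and transitive; $\mathcal D_{\mathbf I}$ reflexive and transitive; $\mathcal D_{\mathbf O}$ reflexive and symmetric; $\mathcal D_{\mathbf C}$ reflexive, symmetric and transitive interpretations. $\mathcal C_\clubsuit=\{(\mathfrak M,s):\mathfrak M\in\mathcal D_\clubsuit,\ s\in\mathfrak M\}$. $\Gamma\models_{\mathcal C}\varphi$ iff for every $(\mathfrak M,s)\in\mathcal C$, if $\mathfrak M,s$ satisfies all of $\Gamma$ then $\mathfrak M,s\models\varphi$. Sequents are pairs $(\Gamma,\varphi)$, $\Gamma\subseteq Form$ arbitrary; $Sqt$ the set of them. For $\vdash\subseteq Sqt$, $\Gamma\vdash\varphi$ means $(\Gamma,\varphi)\in\vdash$, $\psi\vdash\varphi$ means $\{\psi\}\vdash\varphi$, $\vdash\varphi$ means $\emptyset\vdash\varphi$. Rules (for all $\Gamma,\Delta\subseteq Form$, $p\in P0$, formulas): (A) $\Gamma\cup\{\varphi\}\vdash\varphi$; (Mon) $\Gamma\subseteq\Delta$, $\Gamma\vdash\varphi\Rightarrow\Delta\vdash\varphi$; (Cut) $\Gamma\cup\{\psi\}\vdash\varphi$, $\Delta\vdash\psi\Rightarrow\Gamma\cup\Delta\vdash\varphi$; ($\bot$) $\bot\vdash\varphi$; ($\wedge$I) $\{\varphi,\psi\}\vdash\varphi\wedge\psi$; ($\wedge$E) $\varphi\wedge\psi\vdash\varphi$, $\varphi\wedge\psi\vdash\psi$; ($\to$0) $\vdash\varphi\to\varphi$; ($\to$1) $\Gamma\vdash\varphi\Rightarrow\{\psi\to\chi:\chi\in\Gamma\}\vdash\psi\to\varphi$;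 ($\to$2) $\{\varphi\to\psi,\psi\to\chi\}\vdash\varphi\to\chi$; (Refl) $\{\varphi,\varphi\to\psi\}\vdash\psi$; (Tran) $\varphi\to\psi\vdash(\bot\to\bot)\to(\varphi\to\psi)$; (Sym1) $\Gamma\cup\{\psi\}\vdash\chi$ and $\Gamma\cup\{(\varphi\to\psi)\to\bot\}\vdash\chi\Rightarrow\Gamma\cup\{\varphi\}\vdash\chi$; (Sym2) $\{\alpha\wedge\psi\to\chi,\alpha\wedge((\varphi\to\psi)\to\bot)\to\chi\}\vdash\alpha\wedge\varphi\to\chi$; (Prop$^-$) $p\vdash((\bot\to\bot)\to\bot)\to p$; (Prop$_{tr}$) $p\vdash(\bot\to\bot)\to p$; (Prop$_{sy}$) $p\vdash((p\to\bot)\to\bot)\to p$. Let BASE = (A),(Mon),(Cut),($\bot$),($\wedge$I),($\wedge$E),($\to$0),($\to$1),($\to$2). Each $\vdash_\clubsuit$ is the smallest relation $\subseteq Sqt$ satisfying BASE plus: $\mathbf K^p$: (Prop$^-$); $\mathbf T^p$: (Refl),(Prop$^-$); $\mathbf B^p$: (Sym1),(Sym2),(Prop$_{sy}$); $\mathbf V$: (Tran),(Prop$_{tr}$); $\mathbf{KB4}^p$: (Tran),(Sym1),(Sym2),(Prop$_{tr}$); $\mathbf I$: (Refl),(Tran),(Prop$_{tr}$); $\mathbf O$: (Refl),(Sym1),(Sym2),(Prop$_{sy}$); $\mathbf C$: (Refl),(Tran),(Sym1),(Sym2),(Prop$_{tr}$). *)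

theory Defs
  imports Main
begin

datatype form = Var nat | Bot | Conj form form | Imp form form

abbreviation Top :: form where "Top \<equiv> Imp Bot Bot"

datatype logic = Kp | Tp | Bp | LV | KB4p | LI | LO | LC

fun has_refl :: "logic \<Rightarrow> bool" where
  "has_refl Tp = True" | "has_refl LI = True" | "has_refl LO = True" | "has_refl LC = True"
| "has_refl _ = False"

fun has_sym :: "logic \<Rightarrow> bool" where
  "has_sym Bp = True" | "has_sym KB4p = True" | "has_sym LO = True" | "has_sym LC = True"
| "has_sym _ = False"

fun has_tran :: "logic \<Rightarrow> bool" where
  "has_tran LV = True" | "has_tran KB4p = True" | "has_tran LI = True" | "has_tran LC = True"
| "has_tran _ = False"

fun has_prop_minus :: "logic \<Rightarrow> bool" where
  "has_prop_minus Kp = True" | "has_prop_minus Tp = True" | "has_prop_minus _ = False"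

fun has_prop_sy :: "logic \<Rightarrow> bool" where
  "has_prop_sy Bp = True" | "has_prop_sy LO = True" | "has_prop_sy _ = False"

fun has_prop_tr :: "logic \<Rightarrow> bool" where
  "has_prop_tr LV = True" | "has_prop_tr KB4p = True" | "has_prop_tr LI = True"
| "has_prop_tr LC = True" | "has_prop_tr _ = False"

inductive deriv :: "logic \<Rightarrow> form set \<Rightarrow> form \<Rightarrow> bool" for L :: logic where
  A: "deriv L (\<Gamma> \<union> {\<phi>}) \<phi>"
| Mon: "\<Gamma> \<subseteq> \<Delta> \<Longrightarrow> deriv L \<Gamma> \<phi> \<Longrightarrow> deriv L \<Delta> \<phi>"
| Cut: "deriv L (\<Gamma> \<union> {\<psi>}) \<phi> \<Longrightarrow> deriv L \<Delta> \<psi> \<Longrightarrow> deriv L (\<Gamma> \<union> \<Delta>) \<phi>"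
| BotE: "deriv L {Bot} \<phi>"
| ConjI: "deriv L {\<phi>, \<psi>} (Conj \<phi> \<psi>)"
| ConjE1: "deriv L {Conj \<phi> \<psi>} \<phi>"
| ConjE2: "deriv L {Conj \<phi> \<psi>} \<psi>"
| Imp0: "deriv L {} (Imp \<phi> \<phi>)"
| Imp1: "deriv L \<Gamma> \<phi> \<Longrightarrow> deriv L ((\<lambda>\<chi>. Imp \<psi> \<chi>) ` \<Gamma>) (Imp \<psi> \<phi>)"
| Imp2: "deriv L {Imp \<phi> \<psi>, Imp \<psi> \<chi>} (Imp \<phi> \<chi>)"
| Refl: "has_refl L \<Longrightarrow> deriv L {\<phi>, Imp \<phi> \<psi>} \<psi>"
| Tran: "has_tran L \<Longrightarrow> deriv L {Imp \<phi> \<psi>} (Imp Top (Imp \<phi> \<psi>))"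
| Sym1: "has_sym L \<Longrightarrow> deriv L (\<Gamma> \<union> {\<psi>}) \<chi> \<Longrightarrow>
          deriv L (\<Gamma> \<union> {Imp (Imp \<phi> \<psi>) Bot}) \<chi> \<Longrightarrow> deriv L (\<Gamma> \<union> {\<phi>}) \<chi>"
| Sym2: "has_sym L \<Longrightarrow> deriv L {Imp (Conj \<alpha> \<psi>) \<chi>, Imp (Conj \<alpha> (Imp (Imp \<phi> \<psi>) Bot)) \<chi>}
                                  (Imp (Conj \<alpha> \<phi>) \<chi>)"
| PropMinus: "has_prop_minus L \<Longrightarrow> deriv L {Var p} (Imp (Imp Top Bot) (Var p))"
| PropTr: "has_prop_tr L \<Longrightarrow> deriv L {Var p} (Imp Top (Var p))"
| PropSy: "has_prop_sy L \<Longrightarrow> deriv L {Var p} (Imp (Imp (Imp (Var p) Bot) Bot) (Var p))"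

fun sat :: "('w \<times> 'w) set \<Rightarrow> (nat \<Rightarrow> 'w set) \<Rightarrow> 'w \<Rightarrow> form \<Rightarrow> bool" where
  "sat R V s (Var p) = (s \<in> V p)"
| "sat R V s Bot = False"
| "sat R V s (Conj \<phi> \<psi>) = (sat R V s \<phi> \<and> sat R V s \<psi>)"
| "sat R V s (Imp \<phi> \<psi>) = (\<forall>t. (s, t) \<in> R \<longrightarrow> sat R V t \<phi> \<longrightarrow> sat R V t \<psi>)"

definition R_img :: "('w \<times> 'w) set \<Rightarrow> 'w set \<Rightarrow> 'w set" where
  "R_img R X = {t. \<exists>s\<in>X. (s, t) \<in> R}"

definition R_box :: "'w set \<Rightarrow> ('w \<times> 'w) set \<Rightarrow> 'w set \<Rightarrow> 'w set" where
  "R_box W R X = {s \<in> W. \<forall>t. (s, t) \<in> R \<longrightarrow> t \<in> X}"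

definition is_proposition :: "'w set \<Rightarrow> ('w \<times> 'w) set \<Rightarrow> 'w set \<Rightarrow> bool" where
  "is_proposition W R X \<longleftrightarrow> X \<subseteq> W \<and> R_img R X \<inter> R_box W R (R_img R X) \<subseteq> X"

definition is_model :: "'w set \<Rightarrow> ('w \<times> 'w) set \<Rightarrow> (nat \<Rightarrow> 'w set) \<Rightarrow> bool" where
  "is_model W R V \<longleftrightarrow> W \<noteq> {} \<and> R \<subseteq> W \<times> W \<and> (\<forall>p. V p \<subseteq> W)"

definition is_interpretation :: "'w set \<Rightarrow> ('w \<times> 'w) set \<Rightarrow> (nat \<Rightarrow> 'w set) \<Rightarrow> bool" where
  "is_interpretation W R V \<longleftrightarrow> is_model W R V \<and> (\<forall>p. is_proposition W R (V p))"

definition in_class :: "logic \<Rightarrow> 'w set \<Rightarrow> ('w \<times> 'w) set \<Rightarrow> (nat \<Rightarrow> 'w set) \<Rightarrow> bool" where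
  "in_class L W R V \<longleftrightarrow> is_interpretation W R V
     \<and> (has_refl L \<longrightarrow> (\<forall>s\<in>W. (s, s) \<in> R))
     \<and> (has_sym L \<longrightarrow> (\<forall>s t. (s, t) \<in> R \<longrightarrow> (t, s) \<in> R))
     \<and> (has_tran L \<longrightarrow> (\<forall>s t u. (s, t) \<in> R \<longrightarrow> (t, u) \<in> R \<longrightarrow> (s, u) \<in> R))"

definition conseq :: "logic \<Rightarrow> form set \<Rightarrow> form \<Rightarrow> bool" where
  "conseq L \<Gamma> \<phi> \<longleftrightarrow>
     (\<forall>(W :: form set set) R V s. in_class L W R V \<and> s \<in> W \<and> (\<forall>\<gamma>\<in>\<Gamma>. sat R V s \<gamma>)
        \<longrightarrow> sat R V s \<phi>)"

end

theory Submission
  imports Defs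
begin


lemma d_mem: "\<phi> \<in> \<Gamma> \<Longrightarrow> deriv L \<Gamma> \<phi>"
  using deriv.A[of L "\<Gamma>" \<phi>] by (simp add: insert_absorb)

lemma d_top: "deriv L \<Gamma> Top"
  using deriv.Mon[OF _ deriv.Imp0[of L Bot]] by blast

lemma fin_self: "finite \<Gamma> \<Longrightarrow> deriv L \<Gamma> \<phi> \<Longrightarrow> \<exists>\<Gamma>0. \<Gamma>0 \<subseteq> \<Gamma> \<and> finite \<Gamma>0 \<and> deriv L \<Gamma>0 \<phi>"
  by blast

lemma compact: "deriv L \<Gamma> \<phi> \<Longrightarrow> \<exists>\<Gamma>0. \<Gamma>0 \<subseteq> \<Gamma> \<and> finite \<Gamma>0 \<and> deriv L \<Gamma>0 \<phi>"
proof (induction rule: deriv.induct)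
  case (A \<Gamma> \<phi>)
  then show ?case using d_mem[of \<phi> "{\<phi>}" L] by blast
next
  case (Mon \<Gamma> \<Delta> \<phi>)
  then show ?case by blast
next
  case (Cut \<Gamma> \<psi> \<phi> \<Delta>)
  then obtain G1 D1 where g: "G1 \<subseteq> \<Gamma> \<union> {\<psi>}" "finite G1" "deriv L G1 \<phi>"
    and d: "D1 \<subseteq> \<Delta>" "finite D1" "deriv L D1 \<psi>" by blast
  have "deriv L ((G1 - {\<psi>}) \<union> {\<psi>}) \<phi>" by (rule deriv.Mon[OF _ g(3)]) blast
  from deriv.Cut[OF this d(3)] have "deriv L ((G1 - {\<psi>}) \<union> D1) \<phi>" .
  then show ?case using g d by (intro exI[of _ "(G1 - {\<psi>}) \<union> D1"]) auto
next
  case (Imp1 \<Gamma> \<phi> \<psi>)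
  then obtain G where "G \<subseteq> \<Gamma>" "finite G" "deriv L G \<phi>" by blast
  then show ?case using deriv.Imp1[of L G \<phi> \<psi>] by (intro exI[of _ "(\<lambda>\<chi>. Imp \<psi> \<chi>) ` G"]) auto
next
  case (Sym1 \<Gamma> \<psi> \<chi> \<phi>)
  then obtain G1 G2 where g: "G1 \<subseteq> \<Gamma> \<union> {\<psi>}" "finite G1" "deriv L G1 \<chi>"
    and h: "G2 \<subseteq> \<Gamma> \<union> {Imp (Imp \<phi> \<psi>) Bot}" "finite G2" "deriv L G2 \<chi>" by blast
  define G where "G = (G1 - {\<psi>}) \<union> (G2 - {Imp (Imp \<phi> \<psi>) Bot})"
  have "deriv L (G \<union> {\<psi>}) \<chi>" by (rule deriv.Mon[OF _ g(3)]) (use g in \<open>auto simp: G_def\<close>)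
  moreover have "deriv L (G \<union> {Imp (Imp \<phi> \<psi>) Bot}) \<chi>" by (rule deriv.Mon[OF _ h(3)]) (use h in \<open>auto simp: G_def\<close>)
  ultimately have "deriv L (G \<union> {\<phi>}) \<chi>" using deriv.Sym1 Sym1.hyps(1) by blast
  then have dd: "deriv L (G \<union> {\<phi>}) \<chi>" .
  have "G \<union> {\<phi>} \<subseteq> \<Gamma> \<union> {\<phi>}" "finite (G \<union> {\<phi>})" using g h unfolding G_def by auto
  then show ?case using dd by blast
qed (rule fin_self, simp, rule deriv.intros, assumption?)+


lemma cut_fin: "finite \<Pi> \<Longrightarrow> deriv L (S \<union> \<Pi>) \<phi> \<Longrightarrow> (\<forall>\<pi>\<in>\<Pi>. deriv L \<Sigma> \<pi>) \<Longrightarrow> deriv L (S \<union> \<Sigma>) \<phi>"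
proof (induction \<Pi> arbitrary: S rule: finite_induct)
  case empty
  then show ?case by (rule_tac deriv.Mon[of "S \<union> {}"]) auto
next
  case (insert a \<Pi>)
  have e: "S \<union> insert a \<Pi> = (S \<union> \<Pi>) \<union> {a}" by auto
  have h1: "deriv L ((S \<union> \<Pi>) \<union> {a}) \<phi>" using insert.prems(1) unfolding e .
  have h2: "deriv L ((S \<union> \<Pi>) \<union> \<Sigma>) \<phi>" by (rule deriv.Cut[OF h1]) (use insert.prems(2) in simp)
  have e2: "(S \<union> \<Pi>) \<union> \<Sigma> = (S \<union> \<Sigma>) \<union> \<Pi>" by auto
  have "deriv L ((S \<union> \<Sigma>) \<union> \<Sigma>) \<phi>" using insert.IH[of "S \<union> \<Sigma>"] h2 e2 insert.prems(2) by simp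
  then show ?case by (simp add: Un_assoc)
qed

lemma dtrans: "deriv L \<Pi> \<phi> \<Longrightarrow> (\<forall>\<pi>\<in>\<Pi>. deriv L \<Sigma> \<pi>) \<Longrightarrow> deriv L \<Sigma> \<phi>"
  using compact[of L \<Pi> \<phi>] cut_fin[of _ L "{}" \<phi> \<Sigma>] by auto

fun cj :: "form list \<Rightarrow> form" where
  "cj [] = Top" | "cj (x # xs) = Conj x (cj xs)"

lemma cj_E: "y \<in> set ys \<Longrightarrow> deriv L {cj ys} y"
proof (induction ys)
  case (Cons a ys)
  show ?case
  proof (cases "y = a")
    case True then show ?thesis using deriv.ConjE1 by simp
  next
    case False
    then have "deriv L {cj ys} y" using Cons by auto
    then show ?thesis using dtrans[of L "{cj ys}" y "{cj (a#ys)}"] deriv.ConjE2 by auto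
  qed
qed simp

lemma cj_I: "(\<forall>x\<in>set xs. deriv L \<Sigma> x) \<Longrightarrow> deriv L \<Sigma> (cj xs)"
proof (induction xs)
  case Nil then show ?case by (simp add: d_top)
next
  case (Cons a xs)
  then show ?case using dtrans[OF deriv.ConjI[of L a "cj xs"], of \<Sigma>] by auto
qed

lemma cj_set: "deriv L {cj xs} \<phi> = deriv L (set xs) \<phi>"
  using dtrans[of L "{cj xs}" \<phi> "set xs"] dtrans[of L "set xs" \<phi> "{cj xs}"] cj_E cj_I d_mem by blast


definition Th :: "logic \<Rightarrow> form set \<Rightarrow> bool" where
  "Th L \<Gamma> \<longleftrightarrow> (\<forall>\<phi>. deriv L \<Gamma> \<phi> \<longrightarrow> \<phi> \<in> \<Gamma>)"
definition prime :: "form set \<Rightarrow> bool" where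
  "prime \<Gamma> \<longleftrightarrow> (\<forall>\<theta>\<in>\<Gamma>. \<forall>\<chi>. \<chi> \<in> \<Gamma> \<or> Imp (Imp \<theta> \<chi>) Bot \<in> \<Gamma>)"
definition resp :: "form set \<Rightarrow> form set \<Rightarrow> bool" where
  "resp \<Gamma> \<Delta> \<longleftrightarrow> (\<forall>\<alpha> \<beta>. Imp \<alpha> \<beta> \<in> \<Gamma> \<longrightarrow> \<alpha> \<in> \<Delta> \<longrightarrow> \<beta> \<in> \<Delta>)"

lemma th_in: "Th L \<Gamma> \<Longrightarrow> deriv L S \<phi> \<Longrightarrow> S \<subseteq> \<Gamma> \<Longrightarrow> \<phi> \<in> \<Gamma>"
  unfolding Th_def by (metis deriv.Mon)

lemma impcl: "Th L \<Gamma> \<Longrightarrow> deriv L \<Sigma> \<phi> \<Longrightarrow> (\<forall>\<sigma>\<in>\<Sigma>. Imp \<theta> \<sigma> \<in> \<Gamma>) \<Longrightarrow> Imp \<theta> \<phi> \<in> \<Gamma>"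
  using th_in[OF _ deriv.Imp1[of L \<Sigma> \<phi> \<theta>]] by blast

lemma impin: "Th L \<Gamma> \<Longrightarrow> deriv L {c} \<chi> \<Longrightarrow> Imp c \<chi> \<in> \<Gamma>"
  using impcl[of L \<Gamma> "{c}" \<chi> c] th_in[OF _ deriv.Imp0[of L c]] by blast

lemma imp2: "Th L \<Gamma> \<Longrightarrow> Imp a b \<in> \<Gamma> \<Longrightarrow> Imp b c \<in> \<Gamma> \<Longrightarrow> Imp a c \<in> \<Gamma>"
  using th_in[OF _ deriv.Imp2[of L a b c]] by blast

lemma etrans: "Th L \<Gamma> \<Longrightarrow> Imp (cj xs) \<psi> \<in> \<Gamma> \<Longrightarrow> (\<forall>x\<in>set xs. Imp c x \<in> \<Gamma>) \<Longrightarrow> Imp c \<psi> \<in> \<Gamma>"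
  using impcl[of L \<Gamma> "set xs" "cj xs" c] cj_I[of xs L "set xs"] d_mem imp2 by blast

lemma sub: "set zs \<subseteq> set ws \<Longrightarrow> deriv L {cj ws} (cj zs)"
  using cj_set[of L ws] cj_I[of zs L "set ws"] d_mem by blast

lemma th_conj: "Th L \<Gamma> \<Longrightarrow> Conj a b \<in> \<Gamma> \<longleftrightarrow> a \<in> \<Gamma> \<and> b \<in> \<Gamma>"
  using th_in[OF _ deriv.ConjI[of L a b]] th_in[OF _ deriv.ConjE1[of L a b]] th_in[OF _ deriv.ConjE2[of L a b]]
  by blast

lemma th_top: "Th L \<Gamma> \<Longrightarrow> Top \<in> \<Gamma>"
  using th_in[OF _ deriv.Imp0[of L Bot]] by blast

lemma th_refl: "Th L \<Gamma> \<Longrightarrow> has_refl L \<Longrightarrow> resp \<Gamma> \<Gamma>"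
  unfolding resp_def using th_in[OF _ deriv.Refl] by blast

lemma maxext:
  assumes "\<forall>xs. set xs \<subseteq> B \<longrightarrow> Q xs"
  shows "\<exists>\<Delta>. B \<subseteq> \<Delta> \<and> (\<forall>xs. set xs \<subseteq> \<Delta> \<longrightarrow> Q xs) \<and> (\<forall>x. x \<notin> \<Delta> \<longrightarrow> (\<exists>xs. set xs \<subseteq> insert x \<Delta> \<and> \<not> Q xs))"
proof -
  define A where "A = {\<Theta>. B \<subseteq> \<Theta> \<and> (\<forall>xs. set xs \<subseteq> \<Theta> \<longrightarrow> Q xs)}"
  have "\<exists>M\<in>A. \<forall>X\<in>A. M \<subseteq> X \<longrightarrow> X = M"
  proof (rule subset_Zorn_nonempty)
    show "A \<noteq> {}" using assms unfolding A_def by blast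
  next
    fix C assume C: "C \<noteq> {}" "subset.chain A C"
    have "\<forall>xs. set xs \<subseteq> \<Union>C \<longrightarrow> Q xs"
    proof (intro allI impI)
      fix xs assume xs: "set xs \<subseteq> \<Union>C"
      obtain X where "X \<in> C" "set xs \<subseteq> X"
        using finite_subset_Union_chain[OF _ xs C] by blast
      then show "Q xs" using C(2) unfolding A_def subset.chain_def by blast
    qed
    moreover have "B \<subseteq> \<Union>C" using C unfolding A_def subset.chain_def by blast
    ultimately show "\<Union>C \<in> A" unfolding A_def by blast
  qed
  then obtain M where M: "M \<in> A" "\<forall>X\<in>A. M \<subseteq> X \<longrightarrow> X = M" by blast
  have "\<exists>xs. set xs \<subseteq> insert x M \<and> \<not> Q xs" if "x \<notin> M" for x
  proof (rule ccontr)
    assume "\<not> ?thesis"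
    then have "insert x M \<in> A" using M(1) unfolding A_def by auto
    then show False using M(2) that by blast
  qed
  then show ?thesis using M(1) unfolding A_def by blast
qed

lemma finite_to_list: "finite S \<Longrightarrow> \<exists>xs. set xs = S"
  using finite_list by blast

lemma witness:
  assumes G: "Th L \<Gamma>" and n: "Imp \<phi> \<psi> \<notin> \<Gamma>"
  shows "\<exists>\<Delta>. Th L \<Delta> \<and> Bot \<notin> \<Delta> \<and> \<phi> \<in> \<Delta> \<and> \<psi> \<notin> \<Delta> \<and> resp \<Gamma> \<Delta> \<and> (has_sym L \<longrightarrow> prime \<Delta>)
     \<and> (has_tran L \<longrightarrow> (\<forall>a b. Imp a b \<in> \<Gamma> \<longrightarrow> Imp a b \<in> \<Delta>))"
proof -
  have base: "\<forall>xs. set xs \<subseteq> {\<phi>} \<longrightarrow> Imp (cj xs) \<psi> \<notin> \<Gamma>"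
  proof (intro allI impI notI)
    fix xs assume "set xs \<subseteq> {\<phi>}" "Imp (cj xs) \<psi> \<in> \<Gamma>"
    moreover have "Imp \<phi> \<phi> \<in> \<Gamma>" using th_in[OF G deriv.Imp0] by blast
    ultimately have "Imp \<phi> \<psi> \<in> \<Gamma>" using etrans[OF G, of xs \<psi> \<phi>] by auto
    with n show False by simp
  qed
  obtain \<Delta> where D: "{\<phi>} \<subseteq> \<Delta>" and ok0: "\<forall>xs. set xs \<subseteq> \<Delta> \<longrightarrow> Imp (cj xs) \<psi> \<notin> \<Gamma>"
    and mx0: "\<forall>x. x \<notin> \<Delta> \<longrightarrow> (\<exists>xs. set xs \<subseteq> insert x \<Delta> \<and> \<not> Imp (cj xs) \<psi> \<notin> \<Gamma>)"
    using maxext[OF base] by (elim exE conjE) 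
  have ok: "\<And>xs. set xs \<subseteq> \<Delta> \<Longrightarrow> Imp (cj xs) \<psi> \<notin> \<Gamma>" using ok0 by simp
  have mx: "\<And>x. x \<notin> \<Delta> \<Longrightarrow> \<exists>xs. set xs \<subseteq> insert x \<Delta> \<and> Imp (cj xs) \<psi> \<in> \<Gamma>" using mx0 by simp
  have nd: "\<exists>zs. set zs \<subseteq> \<Delta> \<and> (\<forall>c. Imp c x \<in> \<Gamma> \<longrightarrow> Imp c (cj zs) \<in> \<Gamma> \<longrightarrow> Imp c \<psi> \<in> \<Gamma>)"
    if nx: "x \<notin> \<Delta>" for x
  proof -
    obtain xs where xs: "set xs \<subseteq> insert x \<Delta>" "Imp (cj xs) \<psi> \<in> \<Gamma>" using mx[OF nx] by blast
    define zs where "zs = filter (\<lambda>y. y \<noteq> x) xs"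
    have "Imp c \<psi> \<in> \<Gamma>" if c: "Imp c x \<in> \<Gamma>" "Imp c (cj zs) \<in> \<Gamma>" for c
    proof (rule etrans[OF G xs(2)], intro ballI)
      fix y assume y: "y \<in> set xs"
      show "Imp c y \<in> \<Gamma>"
      proof (cases "y = x")
        case True then show ?thesis using c by simp
      next
        case False
        then have "y \<in> set zs" using y unfolding zs_def by simp
        then have "Imp (cj zs) y \<in> \<Gamma>" using impin[OF G cj_E] by blast
        then show ?thesis using imp2[OF G c(2)] by blast
      qed
    qed
    moreover have "set zs \<subseteq> \<Delta>" using xs(1) unfolding zs_def by auto
    ultimately show ?thesis by blast
  qed
  have subI: "Imp (cj ws) (cj zs) \<in> \<Gamma>" if "set zs \<subseteq> set ws" for ws zs
    using impin[OF G sub[OF that]] .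
  have thD: "Th L \<Delta>"
    unfolding Th_def
  proof (intro allI impI)
    fix \<chi> assume d: "deriv L \<Delta> \<chi>"
    show "\<chi> \<in> \<Delta>"
    proof (rule ccontr)
      assume c: "\<chi> \<notin> \<Delta>"
      obtain S where S: "S \<subseteq> \<Delta>" "finite S" "deriv L S \<chi>" using compact[OF d] by blast
      obtain ys where ys: "set ys = S" using finite_to_list[OF S(2)] by blast
      obtain zs where zs: "set zs \<subseteq> \<Delta>" "\<forall>c. Imp c \<chi> \<in> \<Gamma> \<longrightarrow> Imp c (cj zs) \<in> \<Gamma> \<longrightarrow> Imp c \<psi> \<in> \<Gamma>"
        using nd[OF c] by blast
      have "deriv L (set (ys @ zs)) \<chi>" by (rule deriv.Mon[OF _ S(3)]) (use ys in auto)
      then have "Imp (cj (ys @ zs)) \<chi> \<in> \<Gamma>" using impin[OF G] cj_set by blast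
      moreover have "Imp (cj (ys @ zs)) (cj zs) \<in> \<Gamma>" using subI[of zs "ys @ zs"] by auto
      ultimately have "Imp (cj (ys @ zs)) \<psi> \<in> \<Gamma>" using zs(2) by blast
      then show False using ok[of "ys @ zs"] S ys zs by auto
    qed
  qed
  have resp: "resp \<Gamma> \<Delta>"
    unfolding resp_def
  proof (intro allI impI)
    fix \<alpha> \<beta> assume ab: "Imp \<alpha> \<beta> \<in> \<Gamma>" "\<alpha> \<in> \<Delta>"
    show "\<beta> \<in> \<Delta>"
    proof (rule ccontr)
      assume c: "\<beta> \<notin> \<Delta>"
      obtain zs where zs: "set zs \<subseteq> \<Delta>" "\<forall>c. Imp c \<beta> \<in> \<Gamma> \<longrightarrow> Imp c (cj zs) \<in> \<Gamma> \<longrightarrow> Imp c \<psi> \<in> \<Gamma>"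
        using nd[OF c] by blast
      have "Imp (cj (\<alpha> # zs)) \<alpha> \<in> \<Gamma>" using impin[OF G cj_E[of \<alpha> "\<alpha> # zs" L]] by simp
      then have "Imp (cj (\<alpha> # zs)) \<beta> \<in> \<Gamma>" using imp2[OF G _ ab(1)] by blast
      moreover have "Imp (cj (\<alpha> # zs)) (cj zs) \<in> \<Gamma>" using subI[of zs "\<alpha> # zs"] by auto
      ultimately have "Imp (cj (\<alpha> # zs)) \<psi> \<in> \<Gamma>" using zs(2) by blast
      then show False using ok[of "\<alpha> # zs"] ab zs by auto
    qed
  qed
  have psi: "\<psi> \<notin> \<Delta>"
  proof
    assume "\<psi> \<in> \<Delta>"
    moreover have "Imp (cj [\<psi>]) \<psi> \<in> \<Gamma>" using impin[OF G cj_E[of \<psi> "[\<psi>]" L]] by simp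
    ultimately show False using ok[of "[\<psi>]"] by auto
  qed
  have bot: "Bot \<notin> \<Delta>" using psi thD th_in[OF _ deriv.BotE[of L \<psi>]] by blast
  have tran: "has_tran L \<longrightarrow> (\<forall>a b. Imp a b \<in> \<Gamma> \<longrightarrow> Imp a b \<in> \<Delta>)"
  proof (intro impI allI)
    fix a b assume t: "has_tran L" and ab: "Imp a b \<in> \<Gamma>"
    then have "Imp Top (Imp a b) \<in> \<Gamma>" using th_in[OF G deriv.Tran[OF t, of a b]] by blast
    then show "Imp a b \<in> \<Delta>" using resp th_top[OF thD] unfolding resp_def by blast
  qed
  have prime: "has_sym L \<longrightarrow> prime \<Delta>"
  proof (intro impI)
    assume s: "has_sym L"
    show "prime \<Delta>" unfolding prime_def
    proof (intro ballI allI)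
      fix \<theta> \<chi> assume th: "\<theta> \<in> \<Delta>"
      show "\<chi> \<in> \<Delta> \<or> Imp (Imp \<theta> \<chi>) Bot \<in> \<Delta>"
      proof (rule ccontr)
        assume "\<not> ?thesis"
        then have c1: "\<chi> \<notin> \<Delta>" and c2: "Imp (Imp \<theta> \<chi>) Bot \<notin> \<Delta>" by auto
        obtain z1 where z1: "set z1 \<subseteq> \<Delta>" "\<forall>c. Imp c \<chi> \<in> \<Gamma> \<longrightarrow> Imp c (cj z1) \<in> \<Gamma> \<longrightarrow> Imp c \<psi> \<in> \<Gamma>"
          using nd[OF c1] by blast
        obtain z2 where z2: "set z2 \<subseteq> \<Delta>" "\<forall>c. Imp c (Imp (Imp \<theta> \<chi>) Bot) \<in> \<Gamma> \<longrightarrow> Imp c (cj z2) \<in> \<Gamma> \<longrightarrow> Imp c \<psi> \<in> \<Gamma>"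
          using nd[OF c2] by blast
        define a where "a = cj (z1 @ z2)"
        have A1: "Imp (Conj a \<chi>) \<psi> \<in> \<Gamma>"
        proof -
          have "Imp (Conj a \<chi>) \<chi> \<in> \<Gamma>" using impin[OF G deriv.ConjE2] .
          moreover have "deriv L {Conj a \<chi>} (cj z1)"
            using dtrans[OF sub[of z1 "z1 @ z2" L]] deriv.ConjE1[of L a \<chi>] unfolding a_def by auto
          then have "Imp (Conj a \<chi>) (cj z1) \<in> \<Gamma>" using impin[OF G] by blast
          ultimately show ?thesis using z1(2) by blast
        qed
        have A2: "Imp (Conj a (Imp (Imp \<theta> \<chi>) Bot)) \<psi> \<in> \<Gamma>"
        proof -
          have "Imp (Conj a (Imp (Imp \<theta> \<chi>) Bot)) (Imp (Imp \<theta> \<chi>) Bot) \<in> \<Gamma>" using impin[OF G deriv.ConjE2] .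
          moreover have "deriv L {Conj a (Imp (Imp \<theta> \<chi>) Bot)} (cj z2)"
            using dtrans[OF sub[of z2 "z1 @ z2" L]] deriv.ConjE1[of L a] unfolding a_def by auto
          then have "Imp (Conj a (Imp (Imp \<theta> \<chi>) Bot)) (cj z2) \<in> \<Gamma>" using impin[OF G] by blast
          ultimately show ?thesis using z2(2) by blast
        qed
        have "Imp (Conj a \<theta>) \<psi> \<in> \<Gamma>"
          using th_in[OF G deriv.Sym2[OF s, of a \<chi> \<psi> \<theta>]] A1 A2 by blast
        moreover have "deriv L {Conj \<theta> a} (Conj a \<theta>)"
          using dtrans[OF deriv.ConjI[of L a \<theta>], of "{Conj \<theta> a}"] deriv.ConjE1 deriv.ConjE2 by blast
        then have "Imp (cj (\<theta> # z1 @ z2)) (Conj a \<theta>) \<in> \<Gamma>" using impin[OF G] unfolding a_def by simp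
        ultimately have "Imp (cj (\<theta> # z1 @ z2)) \<psi> \<in> \<Gamma>" using imp2[OF G] by blast
        then show False using ok[of "\<theta> # z1 @ z2"] th z1 z2 by auto
      qed
    qed
  qed
  show ?thesis using thD bot D psi resp tran prime by blast
qed

lemma lind:
  assumes n: "\<not> deriv L \<Gamma> \<phi>"
  shows "\<exists>\<Delta>. \<Gamma> \<subseteq> \<Delta> \<and> Th L \<Delta> \<and> Bot \<notin> \<Delta> \<and> \<phi> \<notin> \<Delta> \<and> (has_sym L \<longrightarrow> prime \<Delta>)"
proof -
  have base: "\<forall>xs. set xs \<subseteq> \<Gamma> \<longrightarrow> \<not> deriv L (set xs) \<phi>"
    using n deriv.Mon[of _ \<Gamma> L \<phi>] by (intro allI impI notI) simp
  obtain \<Delta> where D: "\<Gamma> \<subseteq> \<Delta>" and ok0: "\<forall>xs. set xs \<subseteq> \<Delta> \<longrightarrow> \<not> deriv L (set xs) \<phi>"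
    and mx0: "\<forall>x. x \<notin> \<Delta> \<longrightarrow> (\<exists>xs. set xs \<subseteq> insert x \<Delta> \<and> \<not> \<not> deriv L (set xs) \<phi>)"
    using maxext[OF base] by (elim exE conjE)
  have ok: "\<And>xs. set xs \<subseteq> \<Delta> \<Longrightarrow> \<not> deriv L (set xs) \<phi>" using ok0 by simp
  have mx: "\<And>x. x \<notin> \<Delta> \<Longrightarrow> \<exists>xs. set xs \<subseteq> insert x \<Delta> \<and> deriv L (set xs) \<phi>" using mx0 by simp
  have nD: "\<not> deriv L \<Delta> \<phi>"
  proof
    assume dd: "deriv L \<Delta> \<phi>"
    obtain S where S: "S \<subseteq> \<Delta>" "finite S" "deriv L S \<phi>" using compact[OF dd] by blast
    obtain ys where ys: "set ys = S" using finite_to_list[OF S(2)] by blast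
    have "set ys \<subseteq> \<Delta>" using ys S(1) by simp
    from ok[OF this] S(3) ys show False by simp
  qed
  have nd: "deriv L (\<Delta> \<union> {x}) \<phi>" if nx: "x \<notin> \<Delta>" for x
  proof -
    obtain xs where "set xs \<subseteq> insert x \<Delta>" "deriv L (set xs) \<phi>" using mx[OF nx] by blast
    then show ?thesis using deriv.Mon[of "set xs" "\<Delta> \<union> {x}" L \<phi>] by simp
  qed
  have thD: "Th L \<Delta>" unfolding Th_def
  proof (intro allI impI)
    fix \<chi> assume d: "deriv L \<Delta> \<chi>"
    show "\<chi> \<in> \<Delta>"
    proof (rule ccontr)
      assume "\<chi> \<notin> \<Delta>"
      then have "deriv L (\<Delta> \<union> {\<chi>}) \<phi>" using nd by blast
      moreover have "\<forall>\<pi>\<in>\<Delta> \<union> {\<chi>}. deriv L \<Delta> \<pi>" using d d_mem[of _ \<Delta> L] by auto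
      ultimately have "deriv L \<Delta> \<phi>" by (rule dtrans)
      with nD show False ..
    qed
  qed
  have "\<phi> \<notin> \<Delta>" using nD d_mem[of \<phi> \<Delta> L] by blast
  moreover have "Bot \<notin> \<Delta>"
  proof
    assume "Bot \<in> \<Delta>"
    then have "\<forall>\<pi>\<in>{Bot}. deriv L \<Delta> \<pi>" using d_mem[of Bot \<Delta> L] by simp
    from dtrans[OF deriv.BotE[of L \<phi>] this] nD show False by simp
  qed
  moreover have "has_sym L \<longrightarrow> prime \<Delta>"
  proof (intro impI)
    assume s: "has_sym L"
    show "prime \<Delta>" unfolding prime_def
    proof (intro ballI allI)
      fix \<theta> \<chi> assume th: "\<theta> \<in> \<Delta>"
      show "\<chi> \<in> \<Delta> \<or> Imp (Imp \<theta> \<chi>) Bot \<in> \<Delta>"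
      proof (rule ccontr)
        assume "\<not> ?thesis"
        then have "deriv L (\<Delta> \<union> {\<chi>}) \<phi>" "deriv L (\<Delta> \<union> {Imp (Imp \<theta> \<chi>) Bot}) \<phi>" using nd by auto
        from deriv.Sym1[OF s this] have "deriv L (\<Delta> \<union> {\<theta>}) \<phi>" .
        then show False using nD th by (simp add: insert_absorb)
      qed
    qed
  qed
  ultimately show ?thesis using D thD by blast
qed



lemma map_rel: "inj f \<Longrightarrow> (f s, t) \<in> map_prod f f ` R \<longleftrightarrow> (\<exists>t'. t = f t' \<and> (s, t') \<in> R)"
  by (auto simp: inj_eq)

lemma map_rel2: "inj f \<Longrightarrow> (f s, f t) \<in> map_prod f f ` R \<longleftrightarrow> (s, t) \<in> R"
  by (auto simp: inj_eq)

lemma sat_map: "inj f \<Longrightarrow> sat (map_prod f f ` R) (\<lambda>p. f ` V p) (f s) \<phi> = sat R V s \<phi>"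
proof (induction \<phi> arbitrary: s)
  case (Var x)
  then show ?case by (simp add: inj_image_mem_iff)
next
  case (Imp \<phi>1 \<phi>2)
  show ?case
  proof -
    have "sat (map_prod f f ` R) (\<lambda>p. f ` V p) (f s) (Imp \<phi>1 \<phi>2) =
      (\<forall>t'. (s, t') \<in> R \<longrightarrow> sat (map_prod f f ` R) (\<lambda>p. f ` V p) (f t') \<phi>1 \<longrightarrow> sat (map_prod f f ` R) (\<lambda>p. f ` V p) (f t') \<phi>2)"
      using map_rel[OF Imp.prems, of s _ R] by auto
    then show ?thesis using Imp by simp
  qed
qed auto

lemma img_map: "inj f \<Longrightarrow> R_img (map_prod f f ` R) (f ` X) = f ` R_img R X"
  unfolding R_img_def by (auto simp: inj_eq) (force)

lemma box_map: "inj f \<Longrightarrow> R_box (f ` W) (map_prod f f ` R) (f ` Y) = f ` R_box W R Y"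
  unfolding R_box_def by (auto simp: inj_eq inj_image_mem_iff) (force simp: inj_eq)

lemma in_class_map:
  assumes f: "inj f" and c: "in_class L W R V"
  shows "in_class L (f ` W) (map_prod f f ` R) (\<lambda>p. f ` V p)"
proof -
  have m: "is_model W R V" and pr: "\<And>p. is_proposition W R (V p)"
    using c unfolding in_class_def is_interpretation_def by auto
  have "is_model (f ` W) (map_prod f f ` R) (\<lambda>p. f ` V p)"
    using m unfolding is_model_def by auto
  moreover have "is_proposition (f ` W) (map_prod f f ` R) (f ` V p)" for p
  proof -
    have a: "R_img R (V p) \<inter> R_box W R (R_img R (V p)) \<subseteq> V p" "V p \<subseteq> W"
      using pr[of p] unfolding is_proposition_def by auto
    have "R_img (map_prod f f ` R) (f ` V p) \<inter> R_box (f ` W) (map_prod f f ` R) (R_img (map_prod f f ` R) (f ` V p))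
       = f ` (R_img R (V p) \<inter> R_box W R (R_img R (V p)))"
      unfolding img_map[OF f] box_map[OF f] image_Int[OF f] ..
    also have "\<dots> \<subseteq> f ` V p" using a(1) by (rule image_mono)
    finally show ?thesis unfolding is_proposition_def using a(2) by blast
  qed
  moreover have "has_refl L \<longrightarrow> (\<forall>s\<in>f ` W. (s, s) \<in> map_prod f f ` R)"
    using c unfolding in_class_def by auto
  moreover have "has_sym L \<longrightarrow> (\<forall>s t. (s, t) \<in> map_prod f f ` R \<longrightarrow> (t, s) \<in> map_prod f f ` R)"
    using c unfolding in_class_def by auto
  moreover have "has_tran L \<longrightarrow> (\<forall>s t u. (s, t) \<in> map_prod f f ` R \<longrightarrow> (t, u) \<in> map_prod f f ` R \<longrightarrow> (s, u) \<in> map_prod f f ` R)"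
  proof (intro impI allI)
    fix s t u assume tr: "has_tran L" and st: "(s, t) \<in> map_prod f f ` R" and tu: "(t, u) \<in> map_prod f f ` R"
    obtain s' t' where 1: "s = f s'" "t = f t'" "(s', t') \<in> R" using st by auto
    obtain t'' u' where 2: "t = f t''" "u = f u'" "(t'', u') \<in> R" using tu by auto
    have "t' = t''" using 1 2 f by (simp add: inj_eq)
    then have "(s', u') \<in> R" using 1 2 tr c unfolding in_class_def by blast
    then show "(s, u) \<in> map_prod f f ` R" using 1 2 by auto
  qed
  ultimately show ?thesis unfolding in_class_def is_interpretation_def by blast
qed

definition enc :: "form set \<times> form set \<Rightarrow> form set" where
  "enc x = Conj Bot ` fst x \<union> Conj Top ` snd x"

lemma inj_enc: "inj enc"
proof (rule injI)
  fix x y assume "enc x = enc y"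
  then have e: "Conj Bot ` fst x \<union> Conj Top ` snd x = Conj Bot ` fst y \<union> Conj Top ` snd y"
    unfolding enc_def by simp
  have "fst x = {a. Conj Bot a \<in> Conj Bot ` fst x \<union> Conj Top ` snd x}" by auto
  moreover have "snd x = {a. Conj Top a \<in> Conj Bot ` fst x \<union> Conj Top ` snd x}" by auto
  moreover have "fst y = {a. Conj Bot a \<in> Conj Bot ` fst y \<union> Conj Top ` snd y}" by auto
  moreover have "snd y = {a. Conj Top a \<in> Conj Bot ` fst y \<union> Conj Top ` snd y}" by auto
  ultimately show "x = y" using e by (metis prod.expand)
qed



definition Wc :: "logic \<Rightarrow> form set set" where
  "Wc L = {\<Gamma>. Th L \<Gamma> \<and> Bot \<notin> \<Gamma> \<and> (has_sym L \<longrightarrow> prime \<Gamma>)}"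

definition CW :: "logic \<Rightarrow> (form set \<times> form set) set" where
  "CW L = Wc L \<times> Wc L"

definition CR :: "logic \<Rightarrow> ((form set \<times> form set) \<times> (form set \<times> form set)) set" where
  "CR L = {(w, v). w \<in> CW L \<and> v \<in> CW L \<and> resp (snd w) (snd v)
      \<and> (has_tran L \<longrightarrow> (\<forall>a b. Imp a b \<in> snd w \<longrightarrow> Imp a b \<in> snd v))
      \<and> (has_tran L \<or> has_sym L \<or> fst v = snd w \<or> (has_refl L \<and> v = w))}"

definition CV :: "logic \<Rightarrow> nat \<Rightarrow> (form set \<times> form set) set" where
  "CV L p = {w \<in> CW L. Var p \<in> snd w}"

lemma truth: "w \<in> CW L \<Longrightarrow> sat (CR L) (CV L) w \<phi> \<longleftrightarrow> \<phi> \<in> snd w"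
proof (induction \<phi> arbitrary: w)
  case (Var x)
  then show ?case by (simp add: CV_def)
next
  case Bot
  then show ?case by (auto simp: CW_def Wc_def mem_Times_iff)
next
  case (Conj \<phi>1 \<phi>2)
  have "Th L (snd w)" using Conj.prems by (auto simp: CW_def Wc_def)
  then show ?case using Conj th_conj by simp
next
  case (Imp a b)
  have th: "Th L (snd w)" using Imp.prems by (auto simp: CW_def Wc_def)
  show ?case
  proof
    assume s: "sat (CR L) (CV L) w (Imp a b)"
    show "Imp a b \<in> snd w"
    proof (rule ccontr)
      assume n: "Imp a b \<notin> snd w"
      obtain \<Delta> where D: "Th L \<Delta>" "Bot \<notin> \<Delta>" "a \<in> \<Delta>" "b \<notin> \<Delta>" "resp (snd w) \<Delta>" "has_sym L \<longrightarrow> prime \<Delta>"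
        "has_tran L \<longrightarrow> (\<forall>x y. Imp x y \<in> snd w \<longrightarrow> Imp x y \<in> \<Delta>)"
        using witness[OF th n] by blast
      define v where "v = (snd w, \<Delta>)"
      have vW: "v \<in> CW L" using D Imp.prems unfolding v_def CW_def Wc_def by auto
      have "(w, v) \<in> CR L" using D Imp.prems vW unfolding CR_def v_def by auto
      moreover have "sat (CR L) (CV L) v a" using Imp.IH(1)[OF vW] D unfolding v_def by simp
      moreover have "\<not> sat (CR L) (CV L) v b" using Imp.IH(2)[OF vW] D unfolding v_def by simp
      ultimately show False using s[unfolded sat.simps(4)] by blast
    qed
  next
    assume i: "Imp a b \<in> snd w"
    show "sat (CR L) (CV L) w (Imp a b)"
    proof (simp, intro allI impI)
      fix v assume wv: "(w, v) \<in> CR L" and sa: "sat (CR L) (CV L) v a"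
      have vW: "v \<in> CW L" and r: "resp (snd w) (snd v)" using wv unfolding CR_def by auto
      have "a \<in> snd v" using Imp.IH(1)[OF vW] sa by simp
      then have "b \<in> snd v" using r i unfolding resp_def by blast
      then show "sat (CR L) (CV L) v b" using Imp.IH(2)[OF vW] by simp
    qed
  qed
qed

lemma CW_th: "w \<in> CW L \<Longrightarrow> Th L (snd w) \<and> Bot \<notin> snd w \<and> (has_sym L \<longrightarrow> prime (snd w))"
  by (auto simp: CW_def Wc_def mem_Times_iff)

lemma resp_sym:
  assumes p: "prime \<Gamma>" and b: "Bot \<notin> \<Delta>" and r: "resp \<Gamma> \<Delta>"
  shows "resp \<Delta> \<Gamma>"
  unfolding resp_def
proof (intro allI impI)
  fix \<alpha> \<beta> assume i: "Imp \<alpha> \<beta> \<in> \<Delta>" and a: "\<alpha> \<in> \<Gamma>"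
  have "\<beta> \<in> \<Gamma> \<or> Imp (Imp \<alpha> \<beta>) Bot \<in> \<Gamma>" using p a unfolding prime_def by blast
  then show "\<beta> \<in> \<Gamma>" using r i b unfolding resp_def by blast
qed

lemma CR_refl: "has_refl L \<Longrightarrow> w \<in> CW L \<Longrightarrow> (w, w) \<in> CR L"
  using CW_th[of w L] th_refl[of L "snd w"] unfolding CR_def by auto

lemma CR_sym: assumes s: "has_sym L" and wv: "(w, v) \<in> CR L" shows "(v, w) \<in> CR L"
proof -
  have W: "w \<in> CW L" "v \<in> CW L" and r: "resp (snd w) (snd v)"
    and t: "has_tran L \<longrightarrow> (\<forall>a b. Imp a b \<in> snd w \<longrightarrow> Imp a b \<in> snd v)"
    using wv unfolding CR_def by auto
  have pw: "prime (snd w)" and thw: "Th L (snd w)" and thv: "Th L (snd v)" and bv: "Bot \<notin> snd v"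
    using CW_th[OF W(1)] CW_th[OF W(2)] s by auto
  have r2: "resp (snd v) (snd w)" using resp_sym[OF pw bv r] .
  have "has_tran L \<longrightarrow> (\<forall>a b. Imp a b \<in> snd v \<longrightarrow> Imp a b \<in> snd w)"
  proof (intro impI allI)
    fix a b assume tr: "has_tran L" and i: "Imp a b \<in> snd v"
    have "Imp a b \<in> snd w \<or> Imp (Imp Top (Imp a b)) Bot \<in> snd w"
      using pw th_top[OF thw] unfolding prime_def by blast
    moreover have "Imp Top (Imp a b) \<in> snd v" using th_in[OF thv deriv.Tran[OF tr, of a b]] i by blast
    ultimately show "Imp a b \<in> snd w" using r bv unfolding resp_def by blast
  qed
  then show ?thesis using W r2 s unfolding CR_def by auto
qed

lemma CR_tran: assumes t: "has_tran L" and wv: "(w, v) \<in> CR L" and vu: "(v, u) \<in> CR L"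
  shows "(w, u) \<in> CR L"
  using assms unfolding CR_def resp_def by (auto; meson)

lemma prop_tr: assumes t: "has_prop_tr L" and wv: "(w, v) \<in> CR L" and p: "Var p \<in> snd w"
  shows "Var p \<in> snd v"
proof -
  have W: "w \<in> CW L" "v \<in> CW L" and r: "resp (snd w) (snd v)" using wv unfolding CR_def by auto
  have "Imp Top (Var p) \<in> snd w" using th_in[OF _ deriv.PropTr[OF t, of p]] CW_th[OF W(1)] p by blast
  then show ?thesis using r th_top CW_th[OF W(2)] unfolding resp_def by blast
qed

lemma prop_sy:
  assumes t: "has_prop_sy L" and s: "has_sym L"
    and v1: "v \<in> R_img (CR L) (CV L p)" and v2: "v \<in> R_box (CW L) (CR L) (R_img (CR L) (CV L p))"
  shows "v \<in> CV L p"
proof -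
  obtain w where w: "w \<in> CV L p" "(w, v) \<in> CR L" using v1 unfolding R_img_def by blast
  have W: "w \<in> CW L" "v \<in> CW L" and r: "resp (snd w) (snd v)" using w(2) unfolding CR_def by auto
  have "sat (CR L) (CV L) v (Imp (Imp (Var p) Bot) Bot)"
  proof (unfold sat.simps, intro allI impI)
    fix u assume vu: "(v, u) \<in> CR L" and h: "\<forall>x. (u, x) \<in> CR L \<longrightarrow> x \<in> CV L p \<longrightarrow> False"
    have "u \<in> R_img (CR L) (CV L p)" using v2 vu unfolding R_box_def by blast
    then obtain x where "x \<in> CV L p" "(x, u) \<in> CR L" unfolding R_img_def by blast
    then show False using h CR_sym[OF s] by blast
  qed
  then have "Imp (Imp (Var p) Bot) Bot \<in> snd v" using truth[OF W(2)] by blast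
  moreover have "Var p \<in> snd w" using w(1) unfolding CV_def by auto
  then have "Imp (Imp (Imp (Var p) Bot) Bot) (Var p) \<in> snd w"
    using th_in[OF _ deriv.PropSy[OF t, of p]] CW_th[OF W(1)] by blast
  ultimately have "Var p \<in> snd v" using r unfolding resp_def by blast
  then show ?thesis using W unfolding CV_def by auto
qed

lemma prop_minus:
  assumes t: "has_prop_minus L" and ns: "\<not> has_sym L" and nt: "\<not> has_tran L"
    and v1: "v \<in> R_img (CR L) (CV L p)" and v2: "v \<in> R_box (CW L) (CR L) (R_img (CR L) (CV L p))"
  shows "v \<in> CV L p"
proof -
  obtain w where w: "w \<in> CV L p" "(w, v) \<in> CR L" using v1 unfolding R_img_def by blast
  have W: "w \<in> CW L" "v \<in> CW L" and r: "resp (snd w) (snd v)" using w(2) unfolding CR_def by auto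
  have pw: "Var p \<in> snd w" using w(1) unfolding CV_def by auto
  have "Var p \<in> snd v"
  proof (cases "has_refl L")
    case True
    define u where "u = (snd v, snd v)"
    have uW: "u \<in> CW L" using W(2) unfolding u_def CW_def by (auto simp: mem_Times_iff)
    have "(v, u) \<in> CR L" using uW W(2) th_refl[OF _ True] CW_th[OF W(2)] nt unfolding CR_def u_def by auto
    then have "u \<in> R_img (CR L) (CV L p)" using v2 unfolding R_box_def by blast
    then obtain x where x: "x \<in> CV L p" "(x, u) \<in> CR L" unfolding R_img_def by blast
    then have "fst u = snd x \<or> u = x" using ns nt unfolding CR_def by auto
    then show ?thesis using x(1) unfolding CV_def u_def by auto
  next
    case False
    show ?thesis
    proof (cases "\<exists>u. (v, u) \<in> CR L")
      case True
      then obtain u where vu: "(v, u) \<in> CR L" by blast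
      then have "u \<in> R_img (CR L) (CV L p)" using v2 unfolding R_box_def by blast
      then obtain x where x: "x \<in> CV L p" "(x, u) \<in> CR L" unfolding R_img_def by blast
      then have "fst u = snd x" using ns nt False unfolding CR_def by auto
      moreover have "fst u = snd v" using vu ns nt False unfolding CR_def by auto
      ultimately show ?thesis using x(1) unfolding CV_def by auto
    next
      case n: False
      have "sat (CR L) (CV L) v (Imp Top Bot)" using n by simp
      then have "Imp Top Bot \<in> snd v" using truth[OF W(2)] by blast
      moreover have "Imp (Imp Top Bot) (Var p) \<in> snd w"
        using th_in[OF _ deriv.PropMinus[OF t, of p]] CW_th[OF W(1)] pw by blast
      ultimately show ?thesis using r unfolding resp_def by blast
    qed
  qed
  then show ?thesis using W unfolding CV_def by auto
qed

lemma CW_in_class: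
  assumes ne: "CW L \<noteq> {}"
  shows "in_class L (CW L) (CR L) (CV L)"
proof -
  have m: "is_model (CW L) (CR L) (CV L)" using ne unfolding is_model_def CR_def CV_def by auto
  have "is_proposition (CW L) (CR L) (CV L p)" for p
  proof -
    have "v \<in> CV L p" if v1: "v \<in> R_img (CR L) (CV L p)" and v2: "v \<in> R_box (CW L) (CR L) (R_img (CR L) (CV L p))" for v
    proof (cases L)
      case Kp then show ?thesis using prop_minus[OF _ _ _ v1 v2] by simp
    next
      case Tp then show ?thesis using prop_minus[OF _ _ _ v1 v2] by simp
    next
      case Bp then show ?thesis using prop_sy[OF _ _ v1 v2] by simp
    next
      case LO then show ?thesis using prop_sy[OF _ _ v1 v2] by simp
    next
      case LV
      obtain w where "w \<in> CV L p" "(w, v) \<in> CR L" using v1 unfolding R_img_def by blast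
      then show ?thesis using prop_tr[of L w v p] LV unfolding CV_def CR_def by auto
    next
      case KB4p
      obtain w where "w \<in> CV L p" "(w, v) \<in> CR L" using v1 unfolding R_img_def by blast
      then show ?thesis using prop_tr[of L w v p] KB4p unfolding CV_def CR_def by auto
    next
      case LI
      obtain w where "w \<in> CV L p" "(w, v) \<in> CR L" using v1 unfolding R_img_def by blast
      then show ?thesis using prop_tr[of L w v p] LI unfolding CV_def CR_def by auto
    next
      case LC
      obtain w where "w \<in> CV L p" "(w, v) \<in> CR L" using v1 unfolding R_img_def by blast
      then show ?thesis using prop_tr[of L w v p] LC unfolding CV_def CR_def by auto
    qed
    then show ?thesis unfolding is_proposition_def CV_def by blast
  qed
  then show ?thesis unfolding in_class_def is_interpretation_def
    using m CR_refl CR_sym CR_tran by blast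
qed

theorem mainTheorem16:
  fixes L :: logic and \<Gamma> :: "form set" and \<phi> :: form
  assumes "conseq L \<Gamma> \<phi>"
  shows "deriv L \<Gamma> \<phi>"
proof (rule ccontr)
  assume n: "\<not> deriv L \<Gamma> \<phi>"
  obtain \<Delta> where D: "\<Gamma> \<subseteq> \<Delta>" "Th L \<Delta>" "Bot \<notin> \<Delta>" "\<phi> \<notin> \<Delta>" "has_sym L \<longrightarrow> prime \<Delta>"
    using lind[OF n] by blast
  define w where "w = (\<Delta>, \<Delta>)"
  have wW: "w \<in> CW L" using D unfolding w_def CW_def Wc_def by auto
  have ic: "in_class L (CW L) (CR L) (CV L)" using CW_in_class wW by blast
  have sG: "\<forall>\<gamma>\<in>\<Gamma>. sat (CR L) (CV L) w \<gamma>" using truth[OF wW] D unfolding w_def by auto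
  have nphi: "\<not> sat (CR L) (CV L) w \<phi>" using truth[OF wW] D unfolding w_def by auto
  have "in_class L (enc ` CW L) (map_prod enc enc ` CR L) (\<lambda>p. enc ` CV L p)"
    by (rule in_class_map[OF inj_enc ic])
  moreover have "enc w \<in> enc ` CW L" using wW by blast
  moreover have "\<forall>\<gamma>\<in>\<Gamma>. sat (map_prod enc enc ` CR L) (\<lambda>p. enc ` CV L p) (enc w) \<gamma>"
    using sG sat_map[OF inj_enc] by blast
  ultimately have "sat (map_prod enc enc ` CR L) (\<lambda>p. enc ` CV L p) (enc w) \<phi>"
    using assms unfolding conseq_def by blast
  then show False using nphi sat_map[OF inj_enc] by blast
qed


end
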